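(* Let $M>0$, $\mu>0$, $n\in\{0,1,2,\dots\}$, and let $m,k\in\{0,1,2,\dots\}$ with $$m\geq 2k+1+\sqrt{6k^2+6k+1},$$ and put $l=m+k$. Let $a\in[0,M)$ satisfy $$1>\frac{a}{M}>\frac{2\sqrt6}{5}\,\frac{\sqrt{1+\frac{1}{m}\left[2k+1+\frac{k(k+1)}{m}\right]}}{1+\frac{2/5}{m}\left[2k+1+\frac{k(k+1)}{m}\right]}.$$ Define $\alpha_1=\frac{ma}{\mu M^2}$, $\alpha_2=\frac{2n+1}{\mu M}\sqrt{1-\frac{a^2}{M^2}}$, $\alpha=\alpha_1-i\alpha_2$, $\epsilon=2\sqrt{1-\frac{a^2}{M^2}}$, $\beta=6-\frac{l(l+1)}{\mu^2M^2}$, and, when $\beta\geq0$, $$q(z)=z^4+\frac{4z}{\beta+\epsilon}\left[(2+\epsilon)(z^2+1)+\alpha(z^2-1)\right]+2\,\frac{16-\beta+3\epsilon}{\beta+\epsilon}\,z^2+1,\quad z\in\mathbb{C}.$$ Then the open interval $$I=\left(\sqrt{\tfrac16\,l(l+1)}\,,\ \frac{\frac{ma}{M}}{2\left(1+\sqrt{1-\frac{a^2}{M^2}}\right)}\right)$$ is non-empty, and for every $\mu$ with $\mu M\in I$, the open first quadrant $\{z\in\mathbb{C}:\mathrm{Re}(z)>0,\ \mathrm{Im}(z)>0\}$ contains precisely $1$ root of $q$. (Note $\frac{2\sqrt6}{5}\approx0.979796$.) *)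

theory Defs
  imports "HOL-Analysis.Analysis" "HOL-Computational_Algebra.Polynomial"
begin

definition alpha1 :: "real \<Rightarrow> real \<Rightarrow> real \<Rightarrow> nat \<Rightarrow> real" where
  "alpha1 M mu a m = real m * a / (mu * M\<^sup>2)"

definition alpha2 :: "real \<Rightarrow> real \<Rightarrow> real \<Rightarrow> nat \<Rightarrow> real" where
  "alpha2 M mu a n = (2 * real n + 1) / (mu * M) * sqrt (1 - a\<^sup>2 / M\<^sup>2)"

definition alphaC :: "real \<Rightarrow> real \<Rightarrow> real \<Rightarrow> nat \<Rightarrow> nat \<Rightarrow> complex" where
  "alphaC M mu a n m = complex_of_real (alpha1 M mu a m) - \<i> * complex_of_real (alpha2 M mu a n)"

definition eps :: "real \<Rightarrow> real \<Rightarrow> real" where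
  "eps M a = 2 * sqrt (1 - a\<^sup>2 / M\<^sup>2)"

definition beta :: "real \<Rightarrow> real \<Rightarrow> nat \<Rightarrow> real" where
  "beta M mu l = 6 - real l * (real l + 1) / (mu\<^sup>2 * M\<^sup>2)"

definition qfun :: "real \<Rightarrow> real \<Rightarrow> real \<Rightarrow> nat \<Rightarrow> nat \<Rightarrow> nat \<Rightarrow> complex \<Rightarrow> complex" where
  "qfun M mu a n m k z =
     (let e = complex_of_real (eps M a); b = complex_of_real (beta M mu (m + k));
          al = alphaC M mu a n m
      in z ^ 4 + 4 * z / (b + e) * ((2 + e) * (z\<^sup>2 + 1) + al * (z\<^sup>2 - 1))
         + 2 * ((16 - b + 3 * e) / (b + e)) * z\<^sup>2 + 1)"

text \<open>The same q as a polynomial, so that root multiplicities (order) are available.\<close>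
definition qpoly :: "real \<Rightarrow> real \<Rightarrow> real \<Rightarrow> nat \<Rightarrow> nat \<Rightarrow> nat \<Rightarrow> complex poly" where
  "qpoly M mu a n m k =
     (let e = complex_of_real (eps M a); b = complex_of_real (beta M mu (m + k));
          al = alphaC M mu a n m; c = 4 / (b + e)
      in [: 1, c * (2 + e - al), 2 * ((16 - b + 3 * e) / (b + e)), c * (2 + e + al), 1 :])"

lemma poly_qpoly: "poly (qpoly M mu a n m k) z = qfun M mu a n m k z"
  unfolding qpoly_def qfun_def Let_def
  by (simp add: algebra_simps power2_eq_square power4_eq_xxxx add_divide_distrib diff_divide_distrib)

end

theory Submission
  imports Defs "HOL-Complex_Analysis.Complex_Analysis"
begin


lemma zorder_poly:
  fixes P :: "complex poly"
  assumes "P \<noteq> 0"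
  shows "zorder (poly P) z = int (order z P)"
proof -
  obtain r where r: "P = [:- z, 1:] ^ order z P * r" and nd: "\<not> [:- z, 1:] dvd r"
    using order_decomp[OF assms] by blast
  have rz: "poly r z \<noteq> 0" using nd poly_eq_0_iff_dvd by blast
  show ?thesis
  proof (rule zorder_eqI[of UNIV z "poly r"])
    show "poly r holomorphic_on UNIV" by (auto intro: holomorphic_intros)
    fix w assume "w \<in> (UNIV::complex set)" "w \<noteq> z"
    have "poly P w = (w - z) ^ order z P * poly r w"
      by (subst r) (simp add: poly_power)
    then show "poly P w = poly r w * (w - z) powi int (order z P)"
      by (simp add: power_int_of_nat mult.commute)
  qed (use rz in auto)
qed

lemma wn_poly:
  fixes P :: "complex poly" and \<gamma> :: "real \<Rightarrow> complex"
  assumes "P \<noteq> 0" "valid_path \<gamma>" "pathfinish \<gamma> = pathstart \<gamma>"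
    and nz: "\<And>z. z \<in> path_image \<gamma> \<Longrightarrow> poly P z \<noteq> 0"
  shows "winding_number (poly P \<circ> \<gamma>) 0 =
         (\<Sum>z\<in>{z. poly P z = 0}. winding_number \<gamma> z * of_nat (order z P))"
proof -
  have fin: "finite {z. poly P z = 0}" using poly_roots_finite[OF assms(1)] .
  have AP: "contour_integral \<gamma> (\<lambda>x. deriv (poly P) x * (\<lambda>_. 1) x / poly P x) = 2 * pi * \<i> *
          (\<Sum>p\<in>{w\<in>UNIV. poly P w = 0 \<or> w \<in> {}}. winding_number \<gamma> p * (\<lambda>_. 1) p * zorder (poly P) p)"
    by (rule argument_principle) (use assms fin in \<open>auto intro: holomorphic_intros\<close>)
  have vp: "valid_path (poly P \<circ> \<gamma>)"
    by (rule valid_path_compose_holomorphic[of _ _ UNIV]) (use assms in \<open>auto intro: holomorphic_intros\<close>)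
  have n0: "0 \<notin> path_image (poly P \<circ> \<gamma>)"
    using nz by (auto simp: path_image_compose)
  have "winding_number (poly P \<circ> \<gamma>) 0 = 1/(2*pi*\<i>) * contour_integral (poly P \<circ> \<gamma>) (\<lambda>w. 1/(w - 0))"
    by (rule winding_number_valid_path[OF vp n0])
  also have "contour_integral (poly P \<circ> \<gamma>) (\<lambda>w. 1/(w - 0)) =
      contour_integral \<gamma> (\<lambda>w. deriv (poly P) w * (1/(poly P w - 0)))"
    by (rule contour_integral_comp_analyticW[of _ UNIV]) (use assms in \<open>auto simp: analytic_on_holomorphic intro!: exI[of _ UNIV] holomorphic_intros\<close>)
  also have "\<dots> = contour_integral \<gamma> (\<lambda>x. deriv (poly P) x * (\<lambda>_. 1) x / poly P x)"
    by simp
  finally show ?thesis using AP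
    by (simp add: zorder_poly[OF assms(1)] comp_def)
qed



definition tri :: "real \<Rightarrow> real \<Rightarrow> complex" where
  "tri R = linepath 0 (of_real R) +++ linepath (of_real R) (\<i> * of_real R) +++ linepath (\<i> * of_real R) 0"

lemma tri_valid: "valid_path (tri R)" and tri_loop: "pathfinish (tri R) = pathstart (tri R)"
  by (auto simp: tri_def)

lemma tri_image: "path_image (tri R) =
   closed_segment 0 (of_real R) \<union> closed_segment (of_real R) (\<i> * of_real R) \<union> closed_segment (\<i> * of_real R) 0"
  by (auto simp: tri_def path_image_join)

lemma seg1: "z \<in> closed_segment 0 (complex_of_real R) \<Longrightarrow> 0 \<le> R \<Longrightarrow> \<exists>x. 0 \<le> x \<and> z = of_real x"
  apply (auto simp: in_segment scaleR_conv_of_real)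
  subgoal for u by (rule exI[of _ "u*R"]) auto
  done

lemma seg3: "z \<in> closed_segment (\<i> * complex_of_real R) 0 \<Longrightarrow> 0 \<le> R \<Longrightarrow> \<exists>y. 0 \<le> y \<and> z = \<i> * of_real y"
  apply (auto simp: in_segment scaleR_conv_of_real)
  subgoal for u by (rule exI[of _ "(1-u)*R"]) auto
  done

lemma seg2: "z \<in> closed_segment (complex_of_real R) (\<i> * complex_of_real R) \<Longrightarrow> Re z + Im z = R"
  apply (auto simp: in_segment scaleR_conv_of_real)
  subgoal for u by (simp add: complex_eq_iff algebra_simps)
  done

lemma tri_in:
  assumes "R > 0" "Re z > 0" "Im z > 0" "Re z + Im z < R"
  shows "winding_number (tri R) z = 1"
proof -
  have "z \<in> interior (convex hull {0, complex_of_real R, \<i> * complex_of_real R})"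
  proof (subst interior_of_triangle, simp, rule DiffI)
    show "z \<in> convex hull {0, complex_of_real R, \<i> * complex_of_real R}"
      unfolding convex_hull_3
      apply (rule CollectI)
      apply (rule exI[of _ "1 - (Re z + Im z)/R"], rule exI[of _ "Re z / R"], rule exI[of _ "Im z / R"])
      using assms by (auto simp: complex_eq_iff field_simps)
    show "z \<notin> closed_segment 0 (complex_of_real R) \<union> closed_segment (complex_of_real R) (\<i> * complex_of_real R) \<union>
      closed_segment (\<i> * complex_of_real R) 0"
      using assms seg1[of z R] seg2[of z R] seg3[of z R] by auto
  qed
  then have "winding_number (linepath 0 (complex_of_real R) +++ linepath (complex_of_real R) (\<i> * complex_of_real R) +++ linepath (\<i> * complex_of_real R) 0) z =
           (if 0 < Im((complex_of_real R - 0) * cnj (complex_of_real R - z)) then 1 else -1)"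
    by (rule winding_number_triangle)
  then show ?thesis using assms by (simp add: tri_def)
qed

lemma tri_out:
  assumes "R > 0" "\<not> (0 \<le> Re z \<and> 0 \<le> Im z \<and> Re z + Im z \<le> R)"
  shows "winding_number (tri R) z = 0"
proof -
  define T where "T = {z. 0 \<le> Re z} \<inter> {z. 0 \<le> Im z} \<inter> {z. inner (1 + \<i>) z \<le> R}"
  have cT: "convex T" unfolding T_def
    by (intro convex_Int convex_halfspace_Re_ge convex_halfspace_Im_ge convex_halfspace_le)
  have inT: "z \<in> T \<longleftrightarrow> 0 \<le> Re z \<and> 0 \<le> Im z \<and> Re z + Im z \<le> R" for z
    by (simp add: T_def inner_complex_def)
  have pts: "0 \<in> T" "complex_of_real R \<in> T" "\<i> * complex_of_real R \<in> T"
    using assms(1) by (auto simp: inT)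
  have "path_image (tri R) \<subseteq> T"
    unfolding tri_image using closed_segment_subset[OF _ _ cT] pts by auto
  then show ?thesis
    using winding_number_zero_outside[of "tri R" T z] cT assms
    by (auto simp: inT tri_loop valid_path_imp_path tri_valid)
qed



lemma sum_tri:
  fixes P :: "complex poly"
  assumes "P \<noteq> 0" "R > 0" and roots: "\<And>z. poly P z = 0 \<Longrightarrow> 2 * norm z < R"
    and axes: "\<And>z. poly P z = 0 \<Longrightarrow> 0 \<le> Re z \<Longrightarrow> 0 \<le> Im z \<Longrightarrow> 0 < Re z \<and> 0 < Im z"
  shows "(\<Sum>z\<in>{z. poly P z = 0}. winding_number (tri R) z * of_nat (order z P)) =
         of_nat (\<Sum>z\<in>{z. Re z > 0 \<and> Im z > 0 \<and> poly P z = 0}. order z P)"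
proof -
  let ?A = "{z. poly P z = 0}" and ?Q = "{z. Re z > 0 \<and> Im z > 0 \<and> poly P z = 0}"
  let ?f = "\<lambda>z. winding_number (tri R) z * of_nat (order z P)"
  have fin: "finite ?A" using poly_roots_finite[OF assms(1)] .
  have sub: "?Q \<subseteq> ?A" by auto
  have "sum ?f ?A = sum ?f (?A - ?Q) + sum ?f ?Q"
    using sum.subset_diff[OF sub fin] .
  also have "sum ?f (?A - ?Q) = 0"
  proof (rule sum.neutral, rule ballI)
    fix z assume z: "z \<in> ?A - ?Q"
    then have "\<not> (0 \<le> Re z \<and> 0 \<le> Im z \<and> Re z + Im z \<le> R)" using axes by auto
    then show "?f z = 0" using tri_out[OF assms(2)] by simp
  qed
  also have "sum ?f ?Q = sum (\<lambda>z. of_nat (order z P)) ?Q"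
  proof (rule sum.cong[OF refl])
    fix z assume z: "z \<in> ?Q"
    have "Re z \<le> norm z" "Im z \<le> norm z" using complex_Re_le_cmod abs_Im_le_cmod[of z] by auto
    then have "Re z + Im z < R" using roots[of z] z by auto
    then show "?f z = of_nat (order z P)" using tri_in[OF assms(2)] z by simp
  qed
  finally show ?thesis by simp
qed

lemma seg_avoid:
  fixes u :: complex
  assumes "Im u \<noteq> 0 \<or> Re u > 0" "r > 0"
  shows "0 \<notin> closed_segment (complex_of_real r) u"
proof
  assume "0 \<in> closed_segment (complex_of_real r) u"
  then obtain t where t: "0 \<le> t" "t \<le> 1" "0 = (1 - t) *\<^sub>R complex_of_real r + t *\<^sub>R u"
    by (auto simp: in_segment)
  then have re: "0 = (1 - t) * r + t * Re u" and im: "0 = t * Im u"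
    by (auto simp: complex_eq_iff)
  show False
  proof (cases "t = 0")
    case True then show False using re assms by simp
  next
    case False
    then have "Im u = 0" using im by simp
    then have "Re u > 0" using assms by simp
    then have "(1 - t) * r + t * Re u > 0"
      using t False assms by (smt (verit) mult_nonneg_nonneg mult_pos_pos)
    then show False using re by simp
  qed
qed

lemma seg_avoid2:
  fixes u v :: complex
  assumes "norm (u - v) < norm v"
  shows "0 \<notin> closed_segment v u"
proof
  assume "0 \<in> closed_segment v u"
  then obtain t where t: "0 \<le> t" "t \<le> 1" "0 = (1 - t) *\<^sub>R v + t *\<^sub>R u"
    by (auto simp: in_segment)
  then have "v = - (t *\<^sub>R (u - v))" by (simp add: algebra_simps)
  then have "norm v = norm (t *\<^sub>R (u - v))" by (metis norm_minus_cancel)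
  then have "norm v = t * norm (u - v)" using t by simp
  also have "\<dots> \<le> norm (u - v)" using t by (simp add: mult_left_le_one_le)
  finally show False using assms by simp
qed



lemma big_bound:
  fixes c1 c2 c3 z :: complex
  assumes "norm z \<ge> norm c1 + norm c2 + norm c3 + 2"
  shows "norm (c1*z + c2*z^2 + c3*z^3) < norm (z^4+1)"
proof -
  define r where "r = norm z"
  have r2: "r \<ge> 2" using assms r_def by (smt (verit) norm_ge_zero)
  have "norm (c1*z + c2*z^2 + c3*z^3) \<le> norm c1 * r + norm c2 * r^2 + norm c3 * r^3"
    unfolding r_def by (smt (verit) norm_mult norm_power norm_triangle_ineq)
  also have "\<dots> \<le> (norm c1 + norm c2 + norm c3) * r^3"
  proof -
    have "r \<le> r^3" "r^2 \<le> r^3" using r2 by (auto simp: power_increasing[of 1 3 r, simplified] power_increasing[of 2 3 r])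
    then show ?thesis
      by (simp add: distrib_right mult_left_mono add_mono)
  qed
  also have "\<dots> \<le> (r - 2) * r^3"
    using assms r_def by (intro mult_right_mono) auto
  also have "\<dots> < r^4 - 1"
  proof -
    have "r^3 \<ge> 8" using power_mono[OF r2, of 3] by simp
    then show ?thesis by (simp add: algebra_simps power_Suc[symmetric] eval_nat_numeral)
  qed
  also have "r^4 - 1 \<le> norm (z^4+1)"
    using norm_triangle_ineq4[of "z^4+1" 1] by (simp add: r_def norm_power)
  finally show ?thesis .
qed

lemma poly_p: "poly [:1, c1, c2, c3, 1:] z = 1 + c1*z + c2*z^2 + c3*z^3 + z^4" for z :: complex
  by (simp add: algebra_simps eval_nat_numeral)

lemma poly_G: "poly [:1, 0, 0, 0, 1:] z = z^4 + (1::complex)"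
  by (simp add: algebra_simps eval_nat_numeral)



definition w0 :: complex where "w0 = Complex (sqrt 2 / 2) (sqrt 2 / 2)"

lemma w0_sq: "w0^2 = \<i>"
  by (simp add: w0_def complex_eq_iff power2_eq_square)

lemma G_Q1: "{z. Re z > 0 \<and> Im z > 0 \<and> poly [:1, 0, 0, 0, 1:] z = 0} = {w0}"
proof (rule set_eqI, rule iffI)
  fix z assume "z \<in> {z. Re z > 0 \<and> Im z > 0 \<and> poly [:1, 0, 0, 0, 1:] z = 0}"
  then have pos: "Re z > 0" "Im z > 0" and r0: "poly [:1, 0, 0, 0, 1:] z = 0" by auto
  have r: "z^4 + 1 = 0" using r0 by (metis poly_G)
  have "(z^2 - \<i>) * (z^2 + \<i>) = 0" using r by (simp add: algebra_simps eval_nat_numeral)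
  then have "z^2 = \<i> \<or> z^2 = - \<i>" by (auto simp: eq_neg_iff_add_eq_0)
  moreover have "Re (z^2) = Re z ^ 2 - Im z ^ 2" "Im (z^2) = 2 * Re z * Im z"
    by (simp_all add: power2_eq_square)
  moreover have "2 * Re z * Im z > 0" using pos by simp
  ultimately have e: "Re z ^ 2 = Im z ^ 2 \<and> 2 * Re z * Im z = 1"
    by (auto simp: complex_eq_iff)
  then have "sqrt (Re z ^ 2) = sqrt (Im z ^ 2)" by simp
  then have "Re z = Im z" using pos by simp
  then have "Re z ^ 2 = (sqrt 2 / 2)^2" using e by (simp add: power2_eq_square field_simps)
  then have "sqrt (Re z ^ 2) = sqrt ((sqrt 2 / 2)^2)" by simp
  then have "Re z = sqrt 2 / 2" using pos by simp
  then show "z \<in> {w0}" using \<open>Re z = Im z\<close> by (simp add: w0_def complex_eq_iff)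
next
  fix z assume "z \<in> {w0}"
  then have "z = w0" by simp
  have "w0^4 = (w0^2)^2" by simp
  then have "w0^4 = -1" by (simp add: w0_sq)
  then show "z \<in> {z. Re z > 0 \<and> Im z > 0 \<and> poly [:1, 0, 0, 0, 1:] z = 0}"
    using \<open>z = w0\<close> poly_G[of w0] by (simp add: w0_def)
qed

lemma G_order: "order w0 [:1, 0, 0, 0, 1:] = 1"
proof -
  have r: "poly [:1, 0, 0, 0, 1:] w0 = 0"
    using G_Q1 by blast
  have "order w0 [:1, 0, 0, 0, (1::complex):] = Suc (order w0 (pderiv [:1, 0, 0, 0, 1:]))"
    by (rule order_pderiv) (use r in auto)
  moreover have "poly (pderiv [:1, 0, 0, 0, (1::complex):]) w0 \<noteq> 0"
    by (simp add: pderiv_pCons w0_def complex_eq_iff)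
  then have "order w0 (pderiv [:1, 0, 0, 0, (1::complex):]) = 0"
    by (simp add: order_root)
  ultimately show ?thesis by simp
qed



lemma count_Q1:
  fixes c1 c2 c3 :: complex
  assumes Hx: "\<And>x. 0 \<le> x \<Longrightarrow> Im (poly [:1, c1, c2, c3, 1:] (of_real x)) \<noteq> 0 \<or> Re (poly [:1, c1, c2, c3, 1:] (of_real x)) > 0"
  and Hy: "\<And>y. 0 \<le> y \<Longrightarrow> Im (poly [:1, c1, c2, c3, 1:] (\<i> * of_real y)) \<noteq> 0 \<or> Re (poly [:1, c1, c2, c3, 1:] (\<i> * of_real y)) > 0"
  shows "(\<Sum>z\<in>{z. Re z > 0 \<and> Im z > 0 \<and> poly [:1, c1, c2, c3, 1:] z = 0}. order z [:1, c1, c2, c3, 1:]) = 1"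
proof -
  define p where "p = [:1, c1, c2, c3, 1:]"
  define G where "G = [:1, 0, 0, 0, 1::complex:]"
  define S where "S = norm c1 + norm c2 + norm c3"
  define R where "R = 2 * (S + 2)"
  have S0: "S \<ge> 0" unfolding S_def by simp
  have R0: "R > 0" unfolding R_def using S0 by simp
  have p0: "p \<noteq> 0" and G0: "G \<noteq> 0" by (auto simp: p_def G_def)
  have pG: "poly p z - poly G z = c1*z + c2*z^2 + c3*z^3" for z
    unfolding p_def G_def poly_p poly_G by simp
  have big: "norm (poly p z - poly G z) < norm (poly G z)" if "norm z \<ge> S + 2" for z
  proof -
    have "poly G z = z^4 + 1" unfolding G_def by (rule poly_G)
    then show ?thesis using big_bound[of c1 c2 c3 z] that pG[of z] unfolding S_def by simp
  qed
  have bigp: "poly p z \<noteq> 0" and bigG: "poly G z \<noteq> 0" if "norm z \<ge> S + 2" for z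
    using big[OF that] by auto
  have Gx: "Im (poly G (of_real x)) \<noteq> 0 \<or> Re (poly G (of_real x)) > 0" for x
  proof -
    have "poly G (of_real x) = of_real (x^4 + 1)" unfolding G_def poly_G by simp
    moreover have "x^4 + 1 > 0" by (simp add: add_nonneg_pos zero_le_power_eq)
    ultimately show ?thesis by simp
  qed
  have Gy: "Im (poly G (\<i> * of_real y)) \<noteq> 0 \<or> Re (poly G (\<i> * of_real y)) > 0" for y
  proof -
    have "(\<i> * of_real y)^4 = (of_real (y^4) :: complex)"
    proof -
      have "\<i> ^ 4 = (\<i>^2)^2" by (simp flip: power_mult)
      then have "\<i> ^ 4 = 1" by simp
      then show ?thesis by (simp add: power_mult_distrib)
    qed
    then have "poly G (\<i> * of_real y) = of_real (y^4 + 1)" unfolding G_def poly_G by simp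
    moreover have "y^4 + 1 > 0" by (simp add: add_nonneg_pos zero_le_power_eq)
    ultimately show ?thesis by simp
  qed
  have Gxr: "poly G (of_real x) = of_real (x^4 + 1) \<and> x^4 + 1 > 0" for x
    unfolding G_def poly_G by simp (simp add: add_nonneg_pos zero_le_power_eq)
  have Gyr: "poly G (\<i> * of_real y) = of_real (y^4 + 1) \<and> y^4 + 1 > 0" for y
  proof -
    have "(\<i> * of_real y)^4 = (of_real (y^4) :: complex)"
    proof -
      have "\<i> ^ 4 = (\<i>^2)^2" by (simp flip: power_mult)
      then have "\<i> ^ 4 = 1" by simp
      then show ?thesis by (simp add: power_mult_distrib)
    qed
    then show ?thesis unfolding G_def poly_G by simp (simp add: add_nonneg_pos zero_le_power_eq)
  qed
  have nz_of: "u \<noteq> 0" if "Im u \<noteq> 0 \<or> Re u > 0" for u :: complex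
    using that by auto
  have on_img: "poly P z \<noteq> 0 \<and> 0 \<notin> closed_segment (poly G z) (poly P z) \<or> False"
    if img: "z \<in> path_image (tri R)" and PX: "\<And>x. 0 \<le> x \<Longrightarrow> Im (poly P (of_real x)) \<noteq> 0 \<or> Re (poly P (of_real x)) > 0"
      and PY: "\<And>y. 0 \<le> y \<Longrightarrow> Im (poly P (\<i> * of_real y)) \<noteq> 0 \<or> Re (poly P (\<i> * of_real y)) > 0"
      and PB: "\<And>z. norm z \<ge> S + 2 \<Longrightarrow> norm (poly P z - poly G z) < norm (poly G z)"
    for P z
  proof -
    consider "z \<in> closed_segment 0 (of_real R)" | "z \<in> closed_segment (of_real R) (\<i> * of_real R)"
      | "z \<in> closed_segment (\<i> * of_real R) 0"
      using img unfolding tri_image by blast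
    then show ?thesis
    proof cases
      case 1
      then obtain x where x: "0 \<le> x" "z = of_real x" using seg1 R0 by fastforce
      show ?thesis using PX[OF x(1)] Gxr[of x] seg_avoid[of "poly P z" "x^4+1"] x nz_of by auto
    next
      case 3
      then obtain y where y: "0 \<le> y" "z = \<i> * of_real y" using seg3 R0 by fastforce
      show ?thesis using PY[OF y(1)] Gyr[of y] seg_avoid[of "poly P z" "y^4+1"] y nz_of by auto
    next
      case 2
      then have "Re z + Im z = R" by (rule seg2)
      moreover have "Re z \<le> norm z" "Im z \<le> norm z" using complex_Re_le_cmod abs_Im_le_cmod[of z] by auto
      ultimately have "norm z \<ge> S + 2" unfolding R_def distrib_left by linarith
      then have "norm (poly P z - poly G z) < norm (poly G z)" by (rule PB)
      then show ?thesis using seg_avoid2[of "poly P z" "poly G z"] by auto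
    qed
  qed
  have imgp: "poly p z \<noteq> 0 \<and> 0 \<notin> closed_segment (poly G z) (poly p z)" if "z \<in> path_image (tri R)" for z
    using on_img[OF that, of p, OF Hx[folded p_def] Hy[folded p_def] big] by simp
  have imgG: "poly G z \<noteq> 0" if "z \<in> path_image (tri R)" for z
  proof -
    have PBG: "norm (poly G z - poly G z) < norm (poly G z)" if "norm z \<ge> S + 2" for z
      using bigG[OF that] by simp
    show ?thesis using on_img[OF that, of G, OF Gx Gy PBG] by simp
  qed
  have wp: "winding_number (poly p \<circ> tri R) 0 = winding_number (poly G \<circ> tri R) 0"
  proof (rule winding_number_loops_linear_eq)
    show "path (poly G \<circ> tri R)" "path (poly p \<circ> tri R)"
      by (auto intro!: path_continuous_image continuous_intros simp: valid_path_imp_path tri_valid)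
    show "pathfinish (poly G \<circ> tri R) = pathstart (poly G \<circ> tri R)"
      "pathfinish (poly p \<circ> tri R) = pathstart (poly p \<circ> tri R)"
      by (simp_all add: pathfinish_compose pathstart_compose tri_loop)
    fix t :: real assume "t \<in> {0..1}"
    then have "tri R t \<in> path_image (tri R)" by (simp add: path_image_def)
    then show "0 \<notin> closed_segment ((poly G \<circ> tri R) t) ((poly p \<circ> tri R) t)"
      using imgp by simp
  qed
  have axes: "0 < Re z \<and> 0 < Im z"
    if r: "poly P z = 0" and h1: "0 \<le> Re z" and h2: "0 \<le> Im z"
      and PX: "\<And>x. 0 \<le> x \<Longrightarrow> Im (poly P (of_real x)) \<noteq> 0 \<or> Re (poly P (of_real x)) > 0"
      and PY: "\<And>y. 0 \<le> y \<Longrightarrow> Im (poly P (\<i> * of_real y)) \<noteq> 0 \<or> Re (poly P (\<i> * of_real y)) > 0"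
    for P z
  proof (rule ccontr)
    assume "\<not> (0 < Re z \<and> 0 < Im z)"
    then consider "Re z = 0" | "Im z = 0" using h1 h2 by fastforce
    then show False
    proof cases
      case 1
      define y where "y = Im z"
      have zeq: "z = \<i> * of_real y" using 1 by (simp add: complex_eq_iff y_def)
      have "poly P (\<i> * of_real y) = 0" using r zeq by simp
      then show False using PY[of y] h2 y_def by simp
    next
      case 2
      define x where "x = Re z"
      have zeq: "z = of_real x" using 2 by (simp add: complex_eq_iff x_def)
      have "poly P (of_real x) = 0" using r zeq by simp
      then show False using PX[of x] h1 x_def by simp
    qed
  qed
  have sp: "winding_number (poly p \<circ> tri R) 0 = of_nat (\<Sum>z\<in>{z. Re z > 0 \<and> Im z > 0 \<and> poly p z = 0}. order z p)"
  proof -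
    have "winding_number (poly p \<circ> tri R) 0 = (\<Sum>z\<in>{z. poly p z = 0}. winding_number (tri R) z * of_nat (order z p))"
      by (rule wn_poly[OF p0 tri_valid tri_loop]) (use imgp in auto)
    also have "\<dots> = of_nat (\<Sum>z\<in>{z. Re z > 0 \<and> Im z > 0 \<and> poly p z = 0}. order z p)"
    proof (rule sum_tri[OF p0 R0])
      fix z assume "poly p z = 0"
      then have "norm z < S + 2" using bigp by (meson not_le)
      then show "2 * norm z < R" unfolding R_def by simp
    next
      fix z assume "poly p z = 0" "0 \<le> Re z" "0 \<le> Im z"
      then show "0 < Re z \<and> 0 < Im z" using axes[of p z, OF _ _ _ Hx[folded p_def] Hy[folded p_def]] by simp
    qed
    finally show ?thesis .
  qed
  have sG: "winding_number (poly G \<circ> tri R) 0 = of_nat (\<Sum>z\<in>{z. Re z > 0 \<and> Im z > 0 \<and> poly G z = 0}. order z G)"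
  proof -
    have "winding_number (poly G \<circ> tri R) 0 = (\<Sum>z\<in>{z. poly G z = 0}. winding_number (tri R) z * of_nat (order z G))"
      by (rule wn_poly[OF G0 tri_valid tri_loop]) (use imgG in auto)
    also have "\<dots> = of_nat (\<Sum>z\<in>{z. Re z > 0 \<and> Im z > 0 \<and> poly G z = 0}. order z G)"
    proof (rule sum_tri[OF G0 R0])
      fix z assume "poly G z = 0"
      then have "norm z < S + 2" using bigG by (meson not_le)
      then show "2 * norm z < R" unfolding R_def by simp
    next
      fix z assume "poly G z = 0" "0 \<le> Re z" "0 \<le> Im z"
      then show "0 < Re z \<and> 0 < Im z" using axes[of G z, OF _ _ _ Gx Gy] by simp
    qed
    finally show ?thesis .
  qed
  have GQ: "{z. Re z > 0 \<and> Im z > 0 \<and> poly G z = 0} = {w0}"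
    using G_Q1 unfolding G_def .
  have GO: "order w0 G = 1" using G_order unfolding G_def .
  have G1: "(\<Sum>z\<in>{z. Re z > 0 \<and> Im z > 0 \<and> poly G z = 0}. order z G) = 1"
    unfolding GQ using GO by simp
  have "(of_nat (\<Sum>z\<in>{z. Re z > 0 \<and> Im z > 0 \<and> poly p z = 0}. order z p) :: complex)
        = of_nat (\<Sum>z\<in>{z. Re z > 0 \<and> Im z > 0 \<and> poly G z = 0}. order z G)"
    using sp sG wp by (simp only:)
  then have "(\<Sum>z\<in>{z. Re z > 0 \<and> Im z > 0 \<and> poly p z = 0}. order z p) = 1"
    unfolding G1 of_nat_eq_iff .
  then show ?thesis unfolding p_def .
qed



lemma Q_axes:
  fixes cc DD a1 a2 ee :: real
  defines "al \<equiv> complex_of_real a1 - \<i> * complex_of_real a2"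
  defines "c1 \<equiv> complex_of_real cc * (2 + complex_of_real ee - al)"
    and "c3 \<equiv> complex_of_real cc * (2 + complex_of_real ee + al)"
  assumes cc: "cc > 0" and DD: "DD > 0" and a2: "a2 > 0" and a1: "a1 > 2 + ee" and ee: "ee \<ge> 0"
  shows "(\<Sum>z\<in>{z. Re z > 0 \<and> Im z > 0 \<and> poly [:1, c1, complex_of_real DD, c3, 1:] z = 0}.
           order z [:1, c1, complex_of_real DD, c3, 1:]) = 1"
proof (rule count_Q1)
  fix x :: real assume x: "0 \<le> x"
  let ?u = "poly [:1, c1, complex_of_real DD, c3, 1:] (complex_of_real x)"
  have im: "Im ?u = cc * a2 * x * (1 - x^2)"
    unfolding poly_p c1_def c3_def al_def
    by (simp add: algebra_simps power2_eq_square eval_nat_numeral flip: of_real_power)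
  have re: "Re ?u = 1 + cc * (2 + ee - a1) * x + DD * x^2 + cc * (2 + ee + a1) * x^3 + x^4"
    unfolding poly_p c1_def c3_def al_def
    by (simp add: algebra_simps power2_eq_square eval_nat_numeral flip: of_real_power)
  show "Im ?u \<noteq> 0 \<or> Re ?u > 0"
  proof (cases "Im ?u = 0")
    case True
    then have "x = 0 \<or> x^2 = 1" using cc a2 unfolding im by simp
    then have "x = 0 \<or> x = 1" using x by (metis abs_of_nonneg one_power2 power2_eq_imp_eq zero_le_one)
    then show ?thesis
    proof
      assume "x = 0" then show ?thesis unfolding re by simp
    next
      assume "x = 1"
      then have "Re ?u = 2 + 2 * cc * (2 + ee) + DD" unfolding re by (simp add: algebra_simps)
      moreover have "cc * (2 + ee) > 0" using cc ee by simp
      ultimately show ?thesis using DD by simp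
    qed
  qed simp
next
  fix y :: real assume y: "0 \<le> y"
  let ?u = "poly [:1, c1, complex_of_real DD, c3, 1:] (\<i> * complex_of_real y)"
  have im: "Im ?u = cc * (2 + ee - a1) * y - cc * (2 + ee + a1) * y^3"
    unfolding poly_p c1_def c3_def al_def
    by (simp add: algebra_simps power2_eq_square eval_nat_numeral flip: of_real_power)
  show "Im ?u \<noteq> 0 \<or> Re ?u > 0"
  proof (cases "y = 0")
    case True
    then show ?thesis by simp
  next
    case False
    then have yp: "y > 0" using y by simp
    have "cc * (2 + ee - a1) * y < 0" using cc a1 yp by (simp add: mult_pos_neg mult_neg_pos)
    moreover have "cc * (2 + ee + a1) * y^3 > 0" using cc a1 yp ee by simp
    ultimately have "Im ?u < 0" unfolding im by linarith
    then have "Im ?u \<noteq> 0" by linarith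
    then show ?thesis by (rule disjI1)
  qed
qed



lemma aux1: fixes M2 Q x A2 :: real
  assumes "0 < M2" "0 < Q" "2*(1+x)*Q < 3*A2"
  shows "M2*(1+x)/6 < M2*A2/(4*Q)"
proof -
  have "M2 * (2*(1+x)*Q) < M2 * (3*A2)" using assms by simp
  then show ?thesis using assms by (simp add: field_simps)
qed

lemma lin_helper: "(2 * x - 1) * (m::real)^2 = 2 * (x * m^2) - m^2 \<Longrightarrow> 2 * N \<le> m^2 \<Longrightarrow> x * m^2 = N \<Longrightarrow> (2 * x - 1) * m^2 \<le> 0"
  by linarith

lemma part1:
  fixes M a :: real and m k :: nat
  assumes "M > 0"
    and hm: "real m \<ge> 2 * real k + 1 + sqrt (6 * (real k)\<^sup>2 + 6 * real k + 1)"
    and "0 \<le> a" and "a < M"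
    and hA: "a / M > (2 * sqrt 6 / 5) *
           (sqrt (1 + (1 / real m) * (2 * real k + 1 + real k * (real k + 1) / real m))
            / (1 + ((2 / 5) / real m) * (2 * real k + 1 + real k * (real k + 1) / real m)))"
  shows "sqrt (real (m + k) * (real (m + k) + 1) / 6)
           < (real m * a / M) / (2 * (1 + sqrt (1 - a\<^sup>2 / M\<^sup>2)))"
proof -
  define A where "A = a / M"
  define s where "s = sqrt (1 - a\<^sup>2 / M\<^sup>2)"
  define x where "x = (1 / real m) * (2 * real k + 1 + real k * (real k + 1) / real m)"
  have sq1: "sqrt (6 * (real k)\<^sup>2 + 6 * real k + 1) \<ge> 1" by simp
  have m2: "real m \<ge> 2" using hm sq1 of_nat_0_le_iff[of k] by linarith
  have A0: "0 \<le> A" "A < 1" using assms unfolding A_def by (auto simp: divide_less_eq)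
  have aM1: "a^2 / M^2 \<le> 1"
  proof -
    have "a^2 \<le> M^2" using assms by (intro power_mono) auto
    moreover have "M^2 > 0" using assms by simp
    ultimately show "a^2 / M^2 \<le> 1" using divide_le_eq_1_pos[of "M^2" "a^2"] by blast
  qed
  have s2: "s^2 = 1 - A^2" unfolding s_def A_def
  proof -
    show "(sqrt (1 - a\<^sup>2 / M\<^sup>2))\<^sup>2 = 1 - (a / M)\<^sup>2" using aM1 by (simp add: power_divide)
  qed
  have s0: "s \<ge> 0" unfolding s_def using aM1 by simp
  have x0: "x \<ge> 0" unfolding x_def using m2 by simp
  have lx: "real (m + k) * (real (m + k) + 1) = (real m)^2 * (1 + x)"
    unfolding x_def using m2 by (simp add: field_simps power2_eq_square)
  have xh: "1 - 2 * x \<ge> 0"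
  proof -
    define d where "d = real m - (2 * real k + 1)"
    have d0: "d \<ge> sqrt (6 * (real k)\<^sup>2 + 6 * real k + 1)" using hm d_def by simp
    then have "d^2 \<ge> 6 * (real k)\<^sup>2 + 6 * real k + 1"
      by (metis (no_types, lifting) real_sqrt_ge_zero of_nat_0_le_iff power_mono real_sqrt_pow2 zero_le_mult_iff zero_le_numeral zero_le_power2 add_nonneg_nonneg zero_le_one)
    then have "(real m)^2 - 2 * (2 * real k + 1) * real m - 2 * real k * (real k + 1) \<ge> 0"
      unfolding d_def by (simp add: power2_eq_square algebra_simps)
    then have ineq: "2 * ((2 * real k + 1) * real m + real k * (real k + 1)) \<le> (real m)^2" by (simp add: algebra_simps)
    have xm: "x * (real m)^2 = (2 * real k + 1) * real m + real k * (real k + 1)"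
      unfolding x_def using m2 by (simp add: field_simps power2_eq_square)
    have "(2 * x - 1) * (real m)^2 = 2 * (x * (real m)^2) - (real m)^2" by (simp add: algebra_simps)
    then have "(2 * x - 1) * (real m)^2 \<le> 0" by (rule lin_helper[OF _ ineq xm])
    moreover have "(real m)^2 > 0" using m2 by simp
    ultimately have "2 * x - 1 \<le> 0" by (simp add: mult_le_0_iff)
    then show ?thesis by simp
  qed
  have hA': "A > 2 * sqrt 6 * sqrt (1 + x) / (5 + 2 * x)"
  proof -
    have e1: "(2 / 5) / real m * (2 * real k + 1 + real k * (real k + 1) / real m) = (2/5) * x"
      unfolding x_def by simp
    have e2: "(1 / real m) * (2 * real k + 1 + real k * (real k + 1) / real m) = x"
      unfolding x_def by simp
    have h: "A > (2 * sqrt 6 / 5) * (sqrt (1 + x) / (1 + (2/5) * x))"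
      using hA unfolding A_def e1 e2 .
    have "(2 * sqrt 6 / 5) * (sqrt (1 + x) / (1 + (2/5) * x)) = 2 * sqrt 6 * sqrt (1 + x) / (5 + 2 * x)"
      using x0 by (simp add: field_simps)
    then show ?thesis using h by simp
  qed
  have A2: "A^2 * (5 + 2 * x)^2 > 24 * (1 + x)"
  proof -
    have "A * (5 + 2 * x) > 2 * sqrt 6 * sqrt (1 + x)" using hA' x0 by (simp add: divide_less_eq mult.commute)
    moreover have "2 * sqrt 6 * sqrt (1 + x) \<ge> 0" using x0 by simp
    ultimately have "(A * (5 + 2 * x))^2 > (2 * sqrt 6 * sqrt (1 + x))^2"
      by (simp add: power_strict_mono)
    then show ?thesis using x0 by (simp add: power_mult_distrib)
  qed
  have "(s * (5 + 2 * x))^2 < (1 - 2 * x)^2"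
  proof -
    have "(s * (5 + 2 * x))^2 = (1 - A^2) * (5 + 2 * x)^2" by (simp add: power_mult_distrib s2)
    also have "\<dots> < (5 + 2 * x)^2 - 24 * (1 + x)" using A2 by (simp add: algebra_simps)
    also have "\<dots> = (1 - 2 * x)^2" by (simp add: power2_eq_square algebra_simps)
    finally show ?thesis .
  qed
  then have "s * (5 + 2 * x) < 1 - 2 * x"
    using xh power2_less_imp_less by blast
  then have "2 * (1 + x) * (1 + s) < 3 * (1 - s)" by (simp add: algebra_simps)
  then have "2 * (1 + x) * (1 + s) * (1 + s) < 3 * (1 - s) * (1 + s)"
    using s0 by (simp add: mult_strict_right_mono)
  then have key: "2 * (1 + x) * (1 + s)^2 < 3 * A^2"
    using s2 by (simp add: power2_eq_square algebra_simps)
  define Rr where "Rr = (real m * a / M) / (2 * (1 + s))"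
  have Rr: "Rr = real m * A / (2 * (1 + s))" unfolding Rr_def A_def by simp
  have Rr0: "Rr \<ge> 0" unfolding Rr using A0 s0 by simp
  have "real (m + k) * (real (m + k) + 1) / 6 < Rr^2"
  proof -
    have "real (m + k) * (real (m + k) + 1) / 6 = (real m)^2 * (1 + x) / 6" using lx by simp
    also have "\<dots> < (real m)^2 * A^2 / (4 * (1 + s)^2)"
      using aux1[of "(real m)^2" "(1 + s)^2" x "A^2"] key m2 s0 by simp
    also have "\<dots> = Rr^2" unfolding Rr by (simp add: power_divide power_mult_distrib power2_eq_square algebra_simps)
    finally show ?thesis .
  qed
  then have "sqrt (real (m + k) * (real (m + k) + 1) / 6) < sqrt (Rr^2)"
    by (rule real_sqrt_less_mono)
  moreover have "sqrt (Rr^2) = Rr" using Rr0 by simp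
  ultimately have "sqrt (real (m + k) * (real (m + k) + 1) / 6) < Rr" by simp
  then show ?thesis unfolding Rr_def s_def .
qed



theorem mainTheorem11:
  fixes M mu a :: real and n m k :: nat
  assumes "M > 0" and "mu > 0"
    and "real m \<ge> 2 * real k + 1 + sqrt (6 * (real k)\<^sup>2 + 6 * real k + 1)"
    and "0 \<le> a" and "a < M"
    and "1 > a / M"
    and "a / M > (2 * sqrt 6 / 5) *
           (sqrt (1 + (1 / real m) * (2 * real k + 1 + real k * (real k + 1) / real m))
            / (1 + ((2 / 5) / real m) * (2 * real k + 1 + real k * (real k + 1) / real m)))"
  shows "sqrt (real (m + k) * (real (m + k) + 1) / 6)
           < (real m * a / M) / (2 * (1 + sqrt (1 - a\<^sup>2 / M\<^sup>2)))
       \<and> (mu * M \<in> {sqrt (real (m + k) * (real (m + k) + 1) / 6) <..<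
                      (real m * a / M) / (2 * (1 + sqrt (1 - a\<^sup>2 / M\<^sup>2)))}
          \<longrightarrow> (\<Sum>z \<in> {z. Re z > 0 \<and> Im z > 0 \<and> poly (qpoly M mu a n m k) z = 0}.
                 order z (qpoly M mu a n m k)) = 1)"
proof (intro conjI impI)
  show "sqrt (real (m + k) * (real (m + k) + 1) / 6)
           < (real m * a / M) / (2 * (1 + sqrt (1 - a\<^sup>2 / M\<^sup>2)))"
    by (rule part1) (use assms in auto)
next
  assume I: "mu * M \<in> {sqrt (real (m + k) * (real (m + k) + 1) / 6) <..<
                      (real m * a / M) / (2 * (1 + sqrt (1 - a\<^sup>2 / M\<^sup>2)))}"
  define s where "s = sqrt (1 - a\<^sup>2 / M\<^sup>2)"
  define ll where "ll = real (m + k) * (real (m + k) + 1)"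
  define ee where "ee = eps M a"
  define bb where "bb = beta M mu (m + k)"
  define a1 where "a1 = alpha1 M mu a m"
  define a2 where "a2 = alpha2 M mu a n"
  define cc where "cc = 4 / (bb + ee)"
  define DD where "DD = 2 * ((16 - bb + 3 * ee) / (bb + ee))"
  define al where "al = complex_of_real a1 - \<i> * complex_of_real a2"
  have aM1: "a^2 / M^2 < 1"
  proof -
    have "a^2 < M^2" using assms by (intro power_strict_mono) auto
    moreover have "M^2 > 0" using assms by simp
    ultimately show ?thesis by simp
  qed
  have s0: "s > 0" unfolding s_def using aM1 by simp
  have ee: "ee = 2 * s" unfolding ee_def eps_def s_def ..
  have ll0: "ll \<ge> 0" unfolding ll_def by simp
  have muM: "mu * M > 0" using assms by simp
  have I1: "sqrt (ll / 6) < mu * M" and I2: "mu * M < (real m * a / M) / (2 * (1 + s))"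
    using I unfolding ll_def s_def by auto
  have "ll / 6 < (mu * M)^2"
  proof -
    have "sqrt (ll / 6) ^ 2 = ll / 6" using ll0 by simp
    moreover have "sqrt (ll / 6) ^ 2 < (mu * M)^2"
      using I1 ll0 by (intro power_strict_mono) auto
    ultimately show ?thesis by simp
  qed
  moreover have mm: "mu^2 * M^2 > 0" using assms by simp
  ultimately have "ll / (mu^2 * M^2) < 6" by (simp add: divide_less_eq power_mult_distrib mult.commute)
  then have bb0: "bb > 0" unfolding bb_def beta_def ll_def by simp
  have bb6: "bb \<le> 6" unfolding bb_def beta_def using ll0 by (simp add: ll_def)
  have ee0: "ee \<ge> 0" using ee s0 by simp
  have cc0: "cc > 0" unfolding cc_def using bb0 ee0 by simp
  have DD0: "DD > 0" unfolding DD_def using bb0 ee0 bb6 by simp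
  have a20: "a2 > 0" unfolding a2_def alpha2_def using muM aM1 by simp
  have a1e: "a1 > 2 + ee"
  proof -
    have sp: "2 * (1 + s) > 0" using s0 by simp
    have "(mu * M) * (2 * (1 + s)) < real m * a / M" using I2 pos_less_divide_eq[OF sp] by blast
    then have "2 * (1 + s) * (mu * M) < real m * a / M" by (simp add: mult.commute)
    then have "2 * (1 + s) < real m * a / M / (mu * M)" using pos_less_divide_eq[OF muM] by blast
    moreover have "real m * a / M / (mu * M) = a1" unfolding a1_def alpha1_def by (simp add: power2_eq_square field_simps)
    ultimately show ?thesis using ee by simp
  qed
  have qeq: "qpoly M mu a n m k = [:1, complex_of_real cc * (2 + complex_of_real ee - al), complex_of_real DD,
               complex_of_real cc * (2 + complex_of_real ee + al), 1:]"
    unfolding qpoly_def Let_def al_def cc_def DD_def ee_def bb_def a1_def a2_def alphaC_def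
    by simp
  show "(\<Sum>z \<in> {z. Re z > 0 \<and> Im z > 0 \<and> poly (qpoly M mu a n m k) z = 0}.
                 order z (qpoly M mu a n m k)) = 1"
    unfolding qeq al_def by (rule Q_axes[OF cc0 DD0 a20 a1e ee0])
qed

end
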